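(* Fix $T>0$ and assume (a)–(b) below. On the event $\Omega^T=\{Z(T)>0\}$, the simple Sevast'yanov process of the genealogy coincides with the reduced Sevast'yanov process of the underlying (symmetric or asymmetric) branching tree: $(Z\circ\mathcal G)(t)=Z^T(t)$ for all $t\ge0$.
   Context: Ulam–Harris labels $U=\bigcup_{n\ge0}\mathbb N^n$, $\mathbb N^0=\{0\}$ (root $0$, omitted in concatenations $xk$); mother $\mathfrak m x$, rank $\mathfrak r x$ (last letter); $x\preceq y$ iff $x=\mathfrak m^ky$ for some $k\ge0$. Neveu trees: $u\subseteq U$ containing $0$, closed under $\mathfrak m$, children of $x$ labelled $x1,\dots,xn_x$. Branching trees $\Omega=[0,\infty)^2\times\bigcup_u(\{u\}\times(0,\infty)^u)$ with coordinates birth time $\tau$, age $\alpha$, Neveu tree $\gamma$, lengths $L_x$. $\tau_0=\tau$, $\tau_x=\tau_{\mathfrak m x}+L_{\mathfrak m x}$; ages either asymmetric ($\alpha_0=\alpha$, $\alpha_x=\alpha_{\mathfrak m x}+L_{\mathfrak m x}$ if $\mathfrak r x=1$, else $0$) or symmetric (all $0$). Subtree $\mathcal T_x=(\tau_x,\alpha_x,\{y:xy\in\gamma\},(L_{xy}))$. $Z(t)=\sum_{x\in\gamma}\mathbf 1_{(0,L_x]}(t-\tau_x)$ (for any branching tree), $Z_x=Z\circ\mathcal T_x$, $Z^T(t)=\sum_{x\in\gamma}\mathbf 1_{(0,L_x]}(t-\tau_x)\mathbf 1(Z_x(T)>0)$. Law $\mathbb P_{\tau,\alpha}$: root length $L\sim\mu_{\tau,\alpha}$,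 root offspring number $N\mid L\sim\nu_{\tau,\alpha,L}$, first-generation subtrees conditionally independent with laws $\mathbb P_{\tau_k,\alpha_k}$; standing assumptions (a) $\mu_{\tau,\alpha}\ll\xi$ with density $\le C$ for a locally finite $\xi$, (b) offspring means $\le M$ uniformly (so $Z(T)<\infty$ a.s.). Genealogy at time $T$: extant branches $\zeta^T=\{x\in\gamma:\tau_x<T\le\tau_x+L_x\}$; on $\Omega^T$, $\lambda^T$ is the $\preceq$-maximal branch $y$ with $y\preceq x$ for all $x\in\zeta^T$ (least common ancestor). Root length $L^T=\tau_{\lambda^T}+L_{\lambda^T}-\tau$ if $\lambda^T\notin\zeta^T$ and $L^T=T-\tau$ if $\lambda^T\in\zeta^T$; $\Lambda^T=\{\lambda^Tk\in\gamma: Z_{\lambda^Tk}(T)>0\}$, $N^T=|\Lambda^T|$. The genealogy $\mathcal G$ is the branching tree defined recursively: its root has birth time $\tau$, age $\alpha$, length $L^T$ and $N^T$ children, and the subtree rooted at its $k$-th child is $\mathcal G\circ\mathcal T_x$ where $x$ is the element of $\Lambda^T$ with the $k$-th smallest rank; if $Z(T)=1$ then $\mathcal G=(\tau,\alpha,\{0\},T-\tau)$.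
   Formalization: The identity $(Z\circ\mathcal G)(t)=Z^T(t)$ is asserted for $0\le t\le T$ only, in place of all $t\ge0$. The statement above fails without it. *)

theory Defs
  imports Complex_Main "HOL-Library.Sublist"
begin

text \<open>Ulam--Harris labels are lists of positive naturals; the root 0 is the empty list,
  the label x k is x @ [k], the mother is butlast, the rank is last, and
  x \<preceq> y (x is an ancestor of y) is prefix x y.\<close>

definition neveu :: "nat list set \<Rightarrow> bool" where
  "neveu u \<longleftrightarrow> [] \<in> u \<and> (\<forall>x\<in>u. \<forall>k\<in>set x. 1 \<le> k)
     \<and> (\<forall>x\<in>u. x \<noteq> [] \<longrightarrow> butlast x \<in> u)
     \<and> (\<forall>x. \<exists>n::nat. \<forall>k. x @ [k] \<in> u \<longleftrightarrow> (x \<in> u \<and> 1 \<le> k \<and> k \<le> n))"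

text \<open>Branching tree: birth time, age, Neveu tree, lengths (extended by 0 outside the tree).\<close>
record btree =
  bt_tau :: real
  bt_alpha :: real
  bt_gam :: "nat list set"
  bt_len :: "nat list \<Rightarrow> real"

definition is_btree :: "btree \<Rightarrow> bool" where
  "is_btree w \<longleftrightarrow> bt_tau w \<ge> 0 \<and> bt_alpha w \<ge> 0 \<and> neveu (bt_gam w)
     \<and> (\<forall>x\<in>bt_gam w. bt_len w x > 0) \<and> (\<forall>x. x \<notin> bt_gam w \<longrightarrow> bt_len w x = 0)"

definition birth :: "btree \<Rightarrow> nat list \<Rightarrow> real" where
  "birth w x = bt_tau w + (\<Sum>i<length x. bt_len w (take i x))"

text \<open>Ages; the flag symm selects the symmetric (True) or asymmetric (False) convention.
  age_pref symm w x n is the age of the ancestor take n x.\<close>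
fun age_pref :: "bool \<Rightarrow> btree \<Rightarrow> nat list \<Rightarrow> nat \<Rightarrow> real" where
  "age_pref symm w x 0 = bt_alpha w"
| "age_pref symm w x (Suc n) =
     (if symm then 0
      else if x ! n = 1 then age_pref symm w x n + bt_len w (take n x) else 0)"

definition age :: "bool \<Rightarrow> btree \<Rightarrow> nat list \<Rightarrow> real" where
  "age symm w x = age_pref symm w x (length x)"

definition subtree :: "bool \<Rightarrow> btree \<Rightarrow> nat list \<Rightarrow> btree" where
  "subtree symm w x = \<lparr> bt_tau = birth w x, bt_alpha = age symm w x,
      bt_gam = {y. x @ y \<in> bt_gam w}, bt_len = (\<lambda>y. bt_len w (x @ y)) \<rparr>"

definition alive :: "btree \<Rightarrow> real \<Rightarrow> nat list \<Rightarrow> bool" where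
  "alive w t x \<longleftrightarrow> 0 < t - birth w x \<and> t - birth w x \<le> bt_len w x"

definition Z :: "btree \<Rightarrow> real \<Rightarrow> nat" where
  "Z w t = card {x \<in> bt_gam w. alive w t x}"

definition ZT :: "bool \<Rightarrow> real \<Rightarrow> btree \<Rightarrow> real \<Rightarrow> nat" where
  "ZT symm T w t = card {x \<in> bt_gam w. alive w t x \<and> Z (subtree symm w x) T > 0}"

definition extant :: "btree \<Rightarrow> real \<Rightarrow> nat list set" where
  "extant w T = {x \<in> bt_gam w. birth w x < T \<and> T \<le> birth w x + bt_len w x}"

definition lca :: "real \<Rightarrow> btree \<Rightarrow> nat list" where
  "lca T w = (THE y. y \<in> bt_gam w \<and> (\<forall>x\<in>extant w T. prefix y x)
      \<and> (\<forall>z. z \<in> bt_gam w \<and> (\<forall>x\<in>extant w T. prefix z x) \<longrightarrow> prefix z y))"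

definition LT :: "real \<Rightarrow> btree \<Rightarrow> real" where
  "LT T w = (if lca T w \<notin> extant w T
             then birth w (lca T w) + bt_len w (lca T w) - bt_tau w
             else T - bt_tau w)"

definition Lranks :: "bool \<Rightarrow> real \<Rightarrow> btree \<Rightarrow> nat set" where
  "Lranks symm T w = {k. lca T w @ [k] \<in> bt_gam w \<and> Z (subtree symm w (lca T w @ [k])) T > 0}"

definition NT :: "bool \<Rightarrow> real \<Rightarrow> btree \<Rightarrow> nat" where
  "NT symm T w = card (Lranks symm T w)"

definition kth_child :: "bool \<Rightarrow> real \<Rightarrow> btree \<Rightarrow> nat \<Rightarrow> nat list" where
  "kth_child symm T w k = lca T w @ [sorted_list_of_set (Lranks symm T w) ! (k - 1)]"

text \<open>gsub symm T w y: the branching tree whose genealogy is the subtree of the genealogy of w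
  rooted at the genealogy label y (None if y is not a label of the genealogy).
  Follows the recursion: the k-th child subtree of the genealogy of w is the genealogy of
  T_x w, x the element of Lambda^T of k-th smallest rank; if Z(T) = 1 there are no children.\<close>
fun gsub :: "bool \<Rightarrow> real \<Rightarrow> btree \<Rightarrow> nat list \<Rightarrow> btree option" where
  "gsub symm T w [] = Some w"
| "gsub symm T w (k # ks) =
     (if Z w T \<noteq> 1 \<and> 1 \<le> k \<and> k \<le> NT symm T w
      then gsub symm T (subtree symm w (kth_child symm T w k)) ks else None)"

text \<open>The genealogy G (root length T - tau in the case Z(T) = 1, which is what LT gives there).\<close>
definition genealogy :: "bool \<Rightarrow> real \<Rightarrow> btree \<Rightarrow> btree" where
  "genealogy symm T w = \<lparr> bt_tau = bt_tau w, bt_alpha = bt_alpha w,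
      bt_gam = {y. gsub symm T w y \<noteq> None},
      bt_len = (\<lambda>y. case gsub symm T w y of Some v \<Rightarrow>
                        (if Z v T = 1 then T - bt_tau v else LT T v) | None \<Rightarrow> 0) \<rparr>"

end

theory Submission
  imports Defs
begin

definition inv :: "real \<Rightarrow> btree \<Rightarrow> bool" where
  "inv T w \<longleftrightarrow> [] \<in> bt_gam w \<and> (\<forall>x\<in>bt_gam w. \<forall>p. prefix p x \<longrightarrow> p \<in> bt_gam w)
     \<and> (\<forall>x\<in>bt_gam w. bt_len w x > 0) \<and> (\<forall>x. bt_len w x \<ge> 0) \<and> finite (extant w T)"

lemma birth_Nil[simp]: "birth w [] = bt_tau w"
  by (simp add: birth_def)

lemma birth_snoc: "birth w (z @ [a]) = birth w z + bt_len w z"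
proof -
  have "(\<Sum>i<length (z@[a]). bt_len w (take i (z@[a]))) = (\<Sum>i<length z. bt_len w (take i z)) + bt_len w z"
    by (simp add: sum.lessThan_Suc)
  thus ?thesis by (simp add: birth_def)
qed

lemma birth_subtree: "birth (subtree s w x) y = birth w (x @ y)"
proof (induction y rule: rev_induct)
  case Nil then show ?case by (simp add: subtree_def)
next
  case (snoc a y)
  then show ?case by (simp add: birth_snoc subtree_def flip: append_assoc)
qed

lemma birth_mono_app:
  assumes "\<forall>x. bt_len w x \<ge> 0"
  shows "birth w z \<le> birth w (z @ r)"
proof (induction r rule: rev_induct)
  case Nil then show ?case by simp
next
  case (snoc a r)
  then show ?case using assms birth_snoc[of w "z@r" a] by (simp flip: append_assoc) (smt (verit))
qed

lemma strict_prefix_decomp: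
  assumes "prefix p x" "p \<noteq> x"
  obtains r y where "x = (p @ [r]) @ y"
proof -
  obtain z where z: "x = p @ z" using assms(1) prefixE by blast
  then obtain r y where "z = r # y" using assms(2) by (cases z) auto
  then show ?thesis using that z by simp
qed

lemma birth_strict_prefix:
  assumes "\<forall>x. bt_len w x \<ge> 0" "prefix p q" "p \<noteq> q"
  shows "birth w p + bt_len w p \<le> birth w q"
proof -
  obtain a r where q: "q = (p @ [a]) @ r"
    using assms(2,3) by (rule strict_prefix_decomp)
  show ?thesis using birth_mono_app[OF assms(1), of "p@[a]" r] birth_snoc[of w p a] q by simp
qed

lemma alive_subtree: "alive (subtree s w x) t y \<longleftrightarrow> alive w t (x @ y)"
  by (simp add: alive_def birth_subtree) (simp add: subtree_def)

lemma is_btree_prefix: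
  assumes "is_btree w" "x \<in> bt_gam w" "prefix p x"
  shows "p \<in> bt_gam w"
  using assms(2,3)
proof (induction x arbitrary: p rule: rev_induct)
  case Nil then show ?case by simp
next
  case (snoc a x)
  have "x \<in> bt_gam w" using snoc.prems(1) assms(1)
    unfolding is_btree_def neveu_def by (metis butlast_snoc snoc_eq_iff_butlast)
  then show ?case using snoc by auto
qed

lemma is_btree_inv: "is_btree w \<Longrightarrow> finite (extant w T) \<Longrightarrow> inv T w"
proof -
  assume a: "is_btree w" "finite (extant w T)"
  have "neveu (bt_gam w)" "\<forall>x\<in>bt_gam w. bt_len w x > 0" "\<forall>x. x \<notin> bt_gam w \<longrightarrow> bt_len w x = 0"
    using a(1) unfolding is_btree_def by auto
  then have "[] \<in> bt_gam w" "\<forall>x. bt_len w x \<ge> 0"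
    unfolding neveu_def by (metis order.refl less_imp_le)+
  then show ?thesis unfolding inv_def using is_btree_prefix[OF a(1)] a(2) \<open>\<forall>x\<in>bt_gam w. bt_len w x > 0\<close> by blast
qed

lemma extant_alive: "extant w T = {x\<in>bt_gam w. alive w T x}"
  by (auto simp: extant_def alive_def)

lemma Z_extant: "Z w T = card (extant w T)"
  by (simp add: Z_def extant_alive)

lemma gam_subtree[simp]: "bt_gam (subtree s w x) = {y. x @ y \<in> bt_gam w}"
  and len_subtree[simp]: "bt_len (subtree s w x) = (\<lambda>y. bt_len w (x @ y))"
  and tau_subtree[simp]: "bt_tau (subtree s w x) = birth w x"
  by (simp_all add: subtree_def)

lemma extant_subtree: "extant (subtree s w x) T = (append x) -` extant w T"
  by (auto simp: extant_alive alive_subtree)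

lemma Z_subtree: "Z (subtree s w x) T = card {e \<in> extant w T. prefix x e}"
proof -
  have "{e \<in> extant w T. prefix x e} = append x ` ((append x) -` extant w T)"
    by (auto simp: prefix_def)
  moreover have "inj (append x)" by (simp add: inj_def)
  ultimately have "card {e \<in> extant w T. prefix x e} = card ((append x) -` extant w T)"
    by (metis card_image inj_on_subset subset_UNIV)
  then show ?thesis by (simp add: Z_extant extant_subtree)
qed

lemma Z_subtree_pos:
  assumes "finite (extant w T)"
  shows "Z (subtree s w x) T > 0 \<longleftrightarrow> (\<exists>e\<in>extant w T. prefix x e)"
  using assms by (auto simp: Z_subtree card_gt_0_iff)

lemma Z_subsub: "Z (subtree s (subtree s w x) y) T = Z (subtree s w (x @ y)) T"
  unfolding Z_def by (simp add: alive_subtree)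

lemma inv_subtree:
  assumes "inv T w" "x \<in> bt_gam w"
  shows "inv T (subtree s w x)"
proof -
  have "finite ((append x) -` extant w T)"
    using assms(1) by (intro finite_vimageI) (auto simp: inv_def inj_def)
  then show ?thesis using assms unfolding inv_def
    by (auto simp: extant_subtree)
qed

lemma ZT_set_finite:
  assumes "finite (extant w T)"
  shows "finite {x\<in>bt_gam w. alive w t x \<and> Z (subtree s w x) T > 0}"
proof (rule finite_subset)
  show "{x\<in>bt_gam w. alive w t x \<and> Z (subtree s w x) T > 0} \<subseteq> (\<Union>e\<in>extant w T. set (prefixes e))"
    using Z_subtree_pos[OF assms] by auto
  show "finite (\<Union>e\<in>extant w T. set (prefixes e))" using assms by auto
qed

lemma chain_unique:
  assumes "\<forall>x. bt_len w x \<ge> 0" "prefix x l" "prefix y l" "alive w t x" "alive w t y"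
  shows "x = y"
proof (rule ccontr)
  assume ne: "x \<noteq> y"
  have "prefix x y \<or> prefix y x" using assms(2,3) prefix_same_cases by blast
  then show False
  proof
    assume "prefix x y"
    then have "birth w x + bt_len w x \<le> birth w y" using birth_strict_prefix[OF assms(1)] ne by blast
    then show False using assms(4,5) by (auto simp: alive_def)
  next
    assume "prefix y x"
    then have "birth w y + bt_len w y \<le> birth w x" using birth_strict_prefix[OF assms(1)] ne by metis
    then show False using assms(4,5) by (auto simp: alive_def)
  qed
qed

lemma chain_card:
  assumes "\<forall>x. bt_len w x \<ge> 0"
  shows "card {x. prefix x l \<and> alive w t x} = (if bt_tau w < t \<and> t \<le> birth w l + bt_len w l then 1 else 0)"
proof (cases "bt_tau w < t \<and> t \<le> birth w l + bt_len w l")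
  case True
  define I where "I = {i. i \<le> length l \<and> birth w (take i l) < t}"
  have "0 \<in> I" using True by (simp add: I_def)
  have fI: "finite I" by (simp add: I_def)
  define i where "i = Max I"
  have iI: "i \<in> I" using Max_in[OF fI] \<open>0 \<in> I\<close> i_def by blast
  have imax: "\<And>j. j \<in> I \<Longrightarrow> j \<le> i" using Max_ge[OF fI] i_def by blast
  have al: "alive w t (take i l)"
  proof (cases "i = length l")
    case True
    then show ?thesis using iI \<open>bt_tau w < t \<and> t \<le> birth w l + bt_len w l\<close> by (auto simp: I_def alive_def)
  next
    case False
    then have il: "i < length l" using iI by (auto simp: I_def)
    then have "Suc i \<notin> I" using imax by force
    then have "birth w (take (Suc i) l) \<ge> t" using il by (auto simp: I_def)
    moreover have "take (Suc i) l = take i l @ [l ! i]" using il by (simp add: take_Suc_conv_app_nth)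
    ultimately show ?thesis using iI by (auto simp: I_def alive_def birth_snoc)
  qed
  have "{x. prefix x l \<and> alive w t x} = {take i l}"
    using al chain_unique[OF assms] take_is_prefix by blast
  then show ?thesis using True by simp
next
  case False
  have "{x. prefix x l \<and> alive w t x} = {}"
  proof (rule ccontr)
    assume "{x. prefix x l \<and> alive w t x} \<noteq> {}"
    then obtain x where x: "prefix x l" "alive w t x" by blast
    have "birth w [] \<le> birth w x" using birth_mono_app[OF assms, of "[]" x] by simp
    moreover have "birth w x + bt_len w x \<le> birth w l + bt_len w l"
    proof (cases "x = l")
      case False
      then show ?thesis using birth_strict_prefix[OF assms x(1)] assms by (smt (verit))
    qed simp
    ultimately show False using x(2) False by (auto simp: alive_def)
  qed
  then show ?thesis using False by (simp only: card.empty if_False)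
qed

lemma lca_props:
  assumes "inv T w" "extant w T \<noteq> {}"
  shows "lca T w \<in> bt_gam w" "\<forall>x\<in>extant w T. prefix (lca T w) x"
    "\<And>z. z \<in> bt_gam w \<Longrightarrow> (\<forall>x\<in>extant w T. prefix z x) \<Longrightarrow> prefix z (lca T w)"
proof -
  define C where "C = {y\<in>bt_gam w. \<forall>x\<in>extant w T. prefix y x}"
  obtain e0 where e0: "e0 \<in> extant w T" using assms(2) by blast
  have "C \<subseteq> set (prefixes e0)" using e0 by (auto simp: C_def)
  then have fC: "finite C" using finite_subset by blast
  have "[] \<in> C" using assms(1) by (simp add: C_def inv_def)
  define m where "m = Max (length ` C)"
  have "m \<in> length ` C" unfolding m_def using fC \<open>[] \<in> C\<close> by (intro Max_in) auto
  then obtain l where lC: "l \<in> C" and lm: "length l = m" by blast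
  have lmax: "\<And>z. z \<in> C \<Longrightarrow> prefix z l"
  proof -
    fix z assume zC: "z \<in> C"
    have "length z \<le> m" unfolding m_def using fC zC by simp
    moreover have "prefix z e0" "prefix l e0" using zC lC e0 by (auto simp: C_def)
    ultimately show "prefix z l" using lm prefix_length_prefix by metis
  qed
  have P: "l \<in> bt_gam w \<and> (\<forall>x\<in>extant w T. prefix l x)
      \<and> (\<forall>z. z \<in> bt_gam w \<and> (\<forall>x\<in>extant w T. prefix z x) \<longrightarrow> prefix z l)"
    using lC lmax by (auto simp: C_def)
  have "lca T w = l" unfolding lca_def
  proof (rule the_equality)
    fix y assume "y \<in> bt_gam w \<and> (\<forall>x\<in>extant w T. prefix y x)
      \<and> (\<forall>z. z \<in> bt_gam w \<and> (\<forall>x\<in>extant w T. prefix z x) \<longrightarrow> prefix z y)"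
    then show "y = l" using P prefix_order.antisym by blast
  qed (rule P)
  then show "lca T w \<in> bt_gam w" "\<forall>x\<in>extant w T. prefix (lca T w) x"
    "\<And>z. z \<in> bt_gam w \<Longrightarrow> (\<forall>x\<in>extant w T. prefix z x) \<Longrightarrow> prefix z (lca T w)"
    using P by auto
qed

abbreviation "gch s T w k \<equiv> genealogy s T (subtree s w (kth_child s T w k))"

lemma tau_gen[simp]: "bt_tau (genealogy s T w) = bt_tau w"
  by (simp add: genealogy_def)

lemma len_gen_Nil: "bt_len (genealogy s T w) [] = (if Z w T = 1 then T - bt_tau w else LT T w)"
  by (simp add: genealogy_def)

lemma len_gen_Cons:
  assumes "Z w T \<noteq> 1" "1 \<le> k" "k \<le> NT s T w"
  shows "bt_len (genealogy s T w) (k # ks) = bt_len (gch s T w k) ks"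
  using assms by (simp add: genealogy_def)

lemma gam_gen1: "Z w T = 1 \<Longrightarrow> bt_gam (genealogy s T w) = {[]}"
  by (auto simp: genealogy_def elim: gsub.elims)

lemma gam_gen:
  assumes "Z w T \<noteq> 1"
  shows "bt_gam (genealogy s T w) = insert [] (\<Union>k\<in>{1..NT s T w}. Cons k ` bt_gam (gch s T w k))"
proof (rule set_eqI)
  fix y show "y \<in> bt_gam (genealogy s T w) \<longleftrightarrow> y \<in> insert [] (\<Union>k\<in>{1..NT s T w}. Cons k ` bt_gam (gch s T w k))"
    using assms by (cases y) (auto simp: genealogy_def image_iff)
qed

lemma birth_gen_Cons:
  assumes "Z w T \<noteq> 1" "1 \<le> k" "k \<le> NT s T w"
  shows "birth (genealogy s T w) (k # ks) = bt_tau w + bt_len (genealogy s T w) [] + birth (gch s T w k) ks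
     - birth w (kth_child s T w k)"
proof (induction ks rule: rev_induct)
  case Nil
  have "birth (genealogy s T w) ([] @ [k]) = birth (genealogy s T w) [] + bt_len (genealogy s T w) []"
    by (rule birth_snoc)
  then show ?case by (simp add: genealogy_def)
next
  case (snoc a ks)
  have "birth (genealogy s T w) ((k # ks) @ [a]) = birth (genealogy s T w) (k # ks) + bt_len (genealogy s T w) (k # ks)"
    by (rule birth_snoc)
  moreover have "birth (gch s T w k) (ks @ [a]) = birth (gch s T w k) ks + bt_len (gch s T w k) ks"
    by (rule birth_snoc)
  ultimately show ?case using snoc len_gen_Cons[OF assms] by simp
qed

lemma extant_prefix_gam: "inv T w \<Longrightarrow> e \<in> extant w T \<Longrightarrow> prefix p e \<Longrightarrow> p \<in> bt_gam w"
  by (auto simp: inv_def extant_def)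

lemma lca_not_extant:
  assumes inv: "inv T w" and Zp: "Z w T > 0" and Z1: "Z w T \<noteq> 1"
  shows "lca T w \<notin> extant w T"
proof
  assume lE: "lca T w \<in> extant w T"
  have fE: "finite (extant w T)" using inv by (simp add: inv_def)
  have "card (extant w T) \<ge> 2" using Zp Z1 by (simp add: Z_extant)
  have "\<exists>e\<in>extant w T. e \<noteq> lca T w"
  proof (rule ccontr)
    assume "\<not> ?thesis"
    then have "extant w T \<subseteq> {lca T w}" by blast
    then have "card (extant w T) \<le> 1" using card_mono[of "{lca T w}"] by fastforce
    then show False using \<open>card (extant w T) \<ge> 2\<close> by simp
  qed
  then obtain e where e: "e \<in> extant w T" "e \<noteq> lca T w" by blast
  have ne: "extant w T \<noteq> {}" using e by blast
  have "prefix (lca T w) e" using lca_props(2)[OF inv ne] e by blast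
  then have "birth w (lca T w) + bt_len w (lca T w) \<le> birth w e"
    using birth_strict_prefix[of w] inv e by (auto simp: inv_def)
  then show False using lE e by (auto simp: extant_def)
qed

lemma Lranks_char:
  assumes inv: "inv T w"
  shows "Lranks s T w = {r. \<exists>e\<in>extant w T. prefix (lca T w @ [r]) e}"
  using Z_subtree_pos[of w T s] extant_prefix_gam[OF inv] inv
  by (auto simp: Lranks_def inv_def)

lemma Lranks_finite:
  assumes inv: "inv T w"
  shows "finite (Lranks s T w)"
proof (rule finite_subset)
  show "Lranks s T w \<subseteq> (\<lambda>e. e ! length (lca T w)) ` extant w T"
    unfolding Lranks_char[OF inv] by (force simp: prefix_def nth_append)
  show "finite ((\<lambda>e. e ! length (lca T w)) ` extant w T)" using inv by (simp add: inv_def)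
qed

lemma Z_child_less:
  assumes inv: "inv T w" and Zp: "Z w T > 0" and r: "r \<in> Lranks s T w"
  shows "Z (subtree s w (lca T w @ [r])) T < Z w T"
proof -
  have fE: "finite (extant w T)" using inv by (simp add: inv_def)
  have ne: "extant w T \<noteq> {}" using Zp by (auto simp: Z_extant)
  obtain e where e: "e \<in> extant w T" "prefix (lca T w @ [r]) e" using r Lranks_char[OF inv] by auto
  have "\<exists>e'\<in>extant w T. \<not> prefix (lca T w @ [r]) e'"
  proof (rule ccontr)
    assume "\<not> ?thesis"
    then have "prefix (lca T w @ [r]) (lca T w)"
      using lca_props(3)[OF inv ne] extant_prefix_gam[OF inv e] by blast
    then show False by (metis prefix_length_le length_append_singleton not_less_eq_eq order_refl)
  qed
  then have "{e\<in>extant w T. prefix (lca T w @ [r]) e} \<subset> extant w T" by blast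
  then show ?thesis using Z_subtree[of s w "lca T w @ [r]" T] Z_extant[of w T] fE by (simp add: psubset_card_mono)
qed

definition Sset :: "bool \<Rightarrow> real \<Rightarrow> btree \<Rightarrow> real \<Rightarrow> nat list set" where
  "Sset s T w t = {x\<in>bt_gam w. alive w t x \<and> Z (subtree s w x) T > 0}"

lemma ZT_Sset: "ZT s T w t = card (Sset s T w t)"
  by (simp add: ZT_def Sset_def)

lemma Sset_subtree: "Sset s T (subtree s w x) t = {y. x @ y \<in> Sset s T w t}"
  by (auto simp: Sset_def alive_subtree Z_subsub)

lemma Sset_decomp:
  assumes inv: "inv T w" and Zp: "Z w T > 0" and Z1: "Z w T \<noteq> 1"
  shows "Sset s T w t = {x. prefix x (lca T w) \<and> alive w t x}
     \<union> (\<Union>r\<in>Lranks s T w. append (lca T w @ [r]) ` Sset s T (subtree s w (lca T w @ [r])) t)"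
    (is "?S = ?A \<union> ?B")
proof -
  let ?l = "lca T w"
  have fE: "finite (extant w T)" using inv by (simp add: inv_def)
  have ne: "extant w T \<noteq> {}" using Zp by (auto simp: Z_extant)
  obtain e0 where e0: "e0 \<in> extant w T" using ne by blast
  have lg: "?l \<in> bt_gam w" using lca_props(1)[OF inv ne] .
  show ?thesis
  proof (intro set_eqI iffI)
    fix x assume xS: "x \<in> ?S"
    then obtain e where e: "e \<in> extant w T" "prefix x e" using Z_subtree_pos[OF fE] by (auto simp: Sset_def)
    have "prefix ?l e" using lca_props(2)[OF inv ne] e by blast
    then have "prefix x ?l \<or> prefix ?l x" using e(2) prefix_same_cases by blast
    then show "x \<in> ?A \<union> ?B"
    proof
      assume "prefix x ?l" then show ?thesis using xS by (auto simp: Sset_def)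
    next
      assume lx: "prefix ?l x"
      show ?thesis
      proof (cases "x = ?l")
        case True then show ?thesis using xS by (auto simp: Sset_def)
      next
        case False
        then obtain r y where xy: "x = (?l @ [r]) @ y" using lx strict_prefix_decomp by metis
        have "prefix (?l @ [r]) e" using e(2) xy prefix_order.trans[of "?l @ [r]" x e] by simp
        then have "r \<in> Lranks s T w" unfolding Lranks_char[OF inv] using e(1) by blast
        moreover have "y \<in> Sset s T (subtree s w (?l @ [r])) t" using xS xy by (simp add: Sset_subtree)
        ultimately show ?thesis using xy by blast
      qed
    qed
  next
    fix x assume "x \<in> ?A \<union> ?B"
    then show "x \<in> ?S"
    proof
      assume xA: "x \<in> ?A"
      have "prefix x e0" using xA lca_props(2)[OF inv ne] e0 prefix_order.trans by blast
      then show ?thesis using xA e0 Z_subtree_pos[OF fE] extant_prefix_gam[OF inv e0] by (auto simp: Sset_def)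
    next
      assume "x \<in> ?B"
      then show ?thesis by (auto simp: Sset_subtree)
    qed
  qed
qed

lemma sum_reindex_sorted:
  assumes "finite L"
  shows "(\<Sum>k\<in>{1..card L}. f (sorted_list_of_set L ! (k - 1))) = (\<Sum>r\<in>L. (f r :: nat))"
proof -
  let ?sl = "sorted_list_of_set L"
  have "{1..card L} = Suc ` {..<card L}" by (auto simp: image_iff) (metis Suc_pred' lessThan_iff le_simps(3) less_Suc_eq_le not_less_eq_eq zero_less_iff_neq_zero)
  then have "(\<Sum>k\<in>{1..card L}. f (?sl ! (k - 1))) = (\<Sum>i<card L. f (?sl ! i))"
    by (simp add: sum.reindex)
  also have "\<dots> = sum_list (map f ?sl)"
    by (simp add: sum_list_sum_nth atLeast0LessThan)
  also have "\<dots> = sum f (set ?sl)"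
    by (simp add: sum_list_distinct_conv_sum_set)
  also have "\<dots> = sum f L" using assms by simp
  finally show ?thesis .
qed

lemma main:
  assumes "inv T w" "Z w T > 0" "t \<le> T"
  shows "finite (bt_gam (genealogy s T w)) \<and> Z (genealogy s T w) t = ZT s T w t"
  using assms
proof (induction "Z w T" arbitrary: w rule: less_induct)
  case less
  note inv = less.prems(1) and Zp = less.prems(2) and tT = less.prems(3)
  let ?G = "genealogy s T w"
  have fE: "finite (extant w T)" using inv by (simp add: inv_def)
  have len0: "\<forall>x. bt_len w x \<ge> 0" using inv by (simp add: inv_def)
  have ne: "extant w T \<noteq> {}" using Zp by (auto simp: Z_extant)
  show ?case
  proof (cases "Z w T = 1")
    case True
    have gG: "bt_gam ?G = {[]}" using gam_gen1[OF True] .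
    have "alive ?G t [] \<longleftrightarrow> bt_tau w < t" using True tT by (auto simp: alive_def len_gen_Nil)
    then have "{y \<in> bt_gam ?G. alive ?G t y} = (if bt_tau w < t then {[]} else {})" using gG by auto
    then have ZG: "Z ?G t = (if bt_tau w < t then 1 else 0)" by (simp add: Z_def)
    obtain e where E: "extant w T = {e}" using True by (auto simp: Z_extant card_1_singleton_iff)
    have eg: "e \<in> bt_gam w" and eT: "T \<le> birth w e + bt_len w e" using E by (auto simp: extant_def)
    have "Sset s T w t = {x. prefix x e \<and> alive w t x}"
      using Z_subtree_pos[OF fE, of s] E extant_prefix_gam[OF inv, of e] by (auto simp: Sset_def)
    then have "ZT s T w t = (if bt_tau w < t then 1 else 0)"
      using chain_card[OF len0, of e t] eT tT by (simp add: ZT_Sset)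
    then show ?thesis using ZG gG by simp
  next
    case False
    let ?l = "lca T w"
    let ?Lr = "Lranks s T w"
    let ?n = "NT s T w"
    let ?sl = "sorted_list_of_set ?Lr"
    have fL: "finite ?Lr" using Lranks_finite[OF inv] .
    have lg: "?l \<in> bt_gam w" using lca_props(1)[OF inv ne] .
    have lE: "?l \<notin> extant w T" using lca_not_extant[OF inv Zp False] .
    have LT: "LT T w = birth w ?l + bt_len w ?l - bt_tau w" using lE by (simp add: LT_def)
    have kc: "\<And>k. k \<in> {1..?n} \<Longrightarrow> kth_child s T w k = ?l @ [?sl ! (k - 1)] \<and> ?sl ! (k - 1) \<in> ?Lr"
    proof -
      fix k assume "k \<in> {1..?n}"
      then have "k - 1 < length ?sl" using fL by (auto simp: NT_def)
      then show "kth_child s T w k = ?l @ [?sl ! (k - 1)] \<and> ?sl ! (k - 1) \<in> ?Lr"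
        using fL nth_mem[of "k - 1" ?sl] by (simp add: kth_child_def)
    qed
    have rg: "\<And>r. r \<in> ?Lr \<Longrightarrow> ?l @ [r] \<in> bt_gam w" by (simp add: Lranks_def)
    have IHr: "\<And>r. r \<in> ?Lr \<Longrightarrow> finite (bt_gam (genealogy s T (subtree s w (?l @ [r]))))
        \<and> Z (genealogy s T (subtree s w (?l @ [r]))) t = ZT s T (subtree s w (?l @ [r])) t"
    proof -
      fix r assume r: "r \<in> ?Lr"
      show "finite (bt_gam (genealogy s T (subtree s w (?l @ [r]))))
        \<and> Z (genealogy s T (subtree s w (?l @ [r]))) t = ZT s T (subtree s w (?l @ [r])) t"
      proof (rule less.hyps)
        show "Z (subtree s w (?l @ [r])) T < Z w T" using Z_child_less[OF inv Zp r] .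
        show "inv T (subtree s w (?l @ [r]))" using inv_subtree[OF inv rg[OF r]] .
        show "Z (subtree s w (?l @ [r])) T > 0" using r by (simp add: Lranks_def)
      qed (rule tT)
    qed
    have IH: "\<And>k. k \<in> {1..?n} \<Longrightarrow> finite (bt_gam (gch s T w k)) \<and> Z (gch s T w k) t = ZT s T (subtree s w (?l @ [?sl ! (k - 1)])) t"
      using kc IHr by metis
    have gG: "bt_gam ?G = insert [] (\<Union>k\<in>{1..?n}. Cons k ` bt_gam (gch s T w k))"
      using gam_gen[OF False] .
    have finG: "finite (bt_gam ?G)" using gG IH by auto
    have al0: "alive ?G t [] \<longleftrightarrow> bt_tau w < t \<and> t \<le> birth w ?l + bt_len w ?l"
      using False LT by (auto simp: alive_def len_gen_Nil)
    have alk: "\<And>k ks. k \<in> {1..?n} \<Longrightarrow> alive ?G t (k # ks) \<longleftrightarrow> alive (gch s T w k) t ks"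
    proof -
      fix k ks assume k: "k \<in> {1..?n}"
      then have k1: "1 \<le> k" "k \<le> ?n" by auto
      have "birth w (kth_child s T w k) = birth w ?l + bt_len w ?l" using kc[OF k] by (simp add: birth_snoc)
      then have "birth ?G (k # ks) = birth (gch s T w k) ks"
        using birth_gen_Cons[OF False k1, of ks] LT False by (simp add: len_gen_Nil)
      then show "alive ?G t (k # ks) \<longleftrightarrow> alive (gch s T w k) t ks"
        using len_gen_Cons[OF False k1] by (simp add: alive_def)
    qed
    define AG where "AG k = {ks \<in> bt_gam (gch s T w k). alive (gch s T w k) t ks}" for k
    have "{y \<in> bt_gam ?G. alive ?G t y} = {y::nat list. y = [] \<and> alive ?G t []} \<union> (\<Union>k\<in>{1..?n}. Cons k ` AG k)"
      unfolding gG AG_def using alk by auto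
    moreover have "card (\<Union>k\<in>{1..?n}. Cons k ` AG k) = (\<Sum>k\<in>{1..?n}. card (AG k))"
    proof (subst card_UN_disjoint)
      show "(\<Sum>k\<in>{1..?n}. card (Cons k ` AG k)) = (\<Sum>k\<in>{1..?n}. card (AG k))"
        by (intro sum.cong refl card_image) (simp add: inj_on_def)
    qed (use IH in \<open>auto simp: AG_def\<close>)
    moreover have "finite (\<Union>k\<in>{1..?n}. Cons k ` AG k)" using IH by (auto simp: AG_def)
    moreover have "card ({y::nat list. y = [] \<and> alive ?G t []} \<union> (\<Union>k\<in>{1..?n}. Cons k ` AG k))
        = card {y::nat list. y = [] \<and> alive ?G t []} + card (\<Union>k\<in>{1..?n}. Cons k ` AG k)"
    proof -
      have f1: "finite {y::nat list. y = [] \<and> alive ?G t []}" by (rule finite_subset[of _ "{[]}"]) auto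
      have d: "{y::nat list. y = [] \<and> alive ?G t []} \<inter> (\<Union>k\<in>{1..?n}. Cons k ` AG k) = {}" by auto
      show ?thesis using card_Un_disjoint[OF f1 \<open>finite (\<Union>k\<in>{1..?n}. Cons k ` AG k)\<close> d] .
    qed
    ultimately have ZG: "Z ?G t = card {y::nat list. y = [] \<and> alive ?G t []} + (\<Sum>k\<in>{1..?n}. card (AG k))"
      unfolding Z_def by simp
    have "(\<Sum>k\<in>{1..?n}. card (AG k)) = (\<Sum>k\<in>{1..?n}. ZT s T (subtree s w (?l @ [?sl ! (k - 1)])) t)"
      using IH by (intro sum.cong refl) (simp add: AG_def Z_def)
    also have "\<dots> = (\<Sum>r\<in>?Lr. ZT s T (subtree s w (?l @ [r])) t)"
      unfolding NT_def by (rule sum_reindex_sorted[OF fL])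
    finally have sumG: "(\<Sum>k\<in>{1..?n}. card (AG k)) = (\<Sum>r\<in>?Lr. ZT s T (subtree s w (?l @ [r])) t)" .
    have c0: "card {y::nat list. y = [] \<and> alive ?G t []} = card {x. prefix x ?l \<and> alive w t x}"
      using chain_card[OF len0, of ?l t] al0 by auto
    define B where "B r = append (?l @ [r]) ` Sset s T (subtree s w (?l @ [r])) t" for r
    have fS: "\<And>r. r \<in> ?Lr \<Longrightarrow> finite (Sset s T (subtree s w (?l @ [r])) t)"
    proof -
      fix r assume r: "r \<in> ?Lr"
      have "finite (extant (subtree s w (?l @ [r])) T)" using inv_subtree[OF inv rg[OF r], of s] by (simp add: inv_def)
      then show "finite (Sset s T (subtree s w (?l @ [r])) t)" unfolding Sset_def by (rule ZT_set_finite)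
    qed
    have cB: "\<And>r. card (B r) = ZT s T (subtree s w (?l @ [r])) t"
      unfolding B_def ZT_Sset by (intro card_image) (simp add: inj_on_def)
    have "card (\<Union>r\<in>?Lr. B r) = (\<Sum>r\<in>?Lr. card (B r))"
    proof (rule card_UN_disjoint[OF fL])
      show "\<forall>r\<in>?Lr. finite (B r)" using fS by (simp add: B_def)
      show "\<forall>i\<in>?Lr. \<forall>j\<in>?Lr. i \<noteq> j \<longrightarrow> B i \<inter> B j = {}" by (auto simp: B_def)
    qed
    moreover have "finite (\<Union>r\<in>?Lr. B r)" using fS fL by (simp add: B_def)
    moreover have "finite {x. prefix x ?l \<and> alive w t x}" by (rule finite_subset[of _ "set (prefixes ?l)"]) auto
    moreover have "{x. prefix x ?l \<and> alive w t x} \<inter> (\<Union>r\<in>?Lr. B r) = {}"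
      by (auto simp: B_def dest: prefix_length_le)
    ultimately have "ZT s T w t = card {x. prefix x ?l \<and> alive w t x} + (\<Sum>r\<in>?Lr. card (B r))"
      unfolding ZT_Sset Sset_decomp[OF inv Zp False] B_def[symmetric] by (simp add: card_Un_disjoint)
    then show ?thesis using ZG sumG c0 cB finG by simp
  qed
qed

theorem proposition7:
  fixes symm :: bool and T t :: real and w :: btree
  assumes "is_btree w"
    and "T > 0"
    and "finite (extant w T)"
    and "Z w T > 0"
    and "0 \<le> t" and "t \<le> T"
  shows "Z (genealogy symm T w) t = ZT symm T w t"
  using main[OF is_btree_inv[OF assms(1,3)] assms(4,6)] by simp

end
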